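(* Let $T_1=(Q_1,\Sigma,\Delta,R_1,q_1^0)$ and $T_2=(Q_2,\Delta,\Omega,R_2,q_2^0)$ be top-down tree transducers, let $\hat{T}_1$ be the product construction of $T_1$ and the domain automaton of $T_2$, and let $M$ be the look-ahead transducer constructed from $T_1$ and $T_2$ as described in the context. Let $(q_1,S)$ be a state of $\hat{T}_1$ and $q_2$ a state of $T_2$ such that $(q_1,S,q_2)$ is a state of $M$. If on input $s\in T_\Sigma$ the state $(q_1,S)$ of $\hat{T}_1$ can produce the tree $t$, and on input $t$ the state $q_2$ of $T_2$ can produce the tree $r$, then the state $(q_1,S,q_2)$ of $M$ can produce $r$ on input $s$.
   Context: A top-down tree transducer $T=(Q,\Sigma,\Delta,R,q_0)$ has finite state set $Q$, ranked input/output alphabets $\Sigma,\Delta$, initial state $q_0$, and finite rule set $R$ of rules $q(a(x_1,\dots,x_k))\to t$ with $a\in\Sigma_k$ ($\Sigma_k$ = symbols of rank $k$) and $t$ a tree over $\Delta$ whose leaves may additionally be of the form $q'(x_i)$, $q'\in Q$, $i\in[k]$; rules are used as rewrite rules in the usual way; a state $q$ produces $t$ on input $s$ if the tree $t$ over $\Delta$ is derivable from $q(s)$. For $q\in Q$, $a\in\Sigma_k$, $\text{rhs}_T(q,a)$ is the set of right-hand sides of rules with left-hand side $q(a(x_1,\dots,x_k))$; for a right-hand side $\xi$ (resp. a set $\Gamma$ of right-hand sides), $\xi[x_i]$ (resp. $\Gamma[x_i]$) is the set of states $q'$ such that $q'(x_i)$ occurs in $\xi$ (resp. in some tree of $\Gamma$).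 Domain automaton of $T$: the top-down tree automaton (transducer over $\Sigma$ with rules of the form $p(a(x_1,\dots,x_k))\to a(p_1(x_1),\dots,p_k(x_k))$) with states all subsets of $Q$, initial state $\{q_0\}$, rules $S(a(x_1,\dots,x_k))\to a(S_1(x_1),\dots,S_k(x_k))$ for every $a\in\Sigma_k$, nonempty $S=\{q_1,\dots,q_n\}\subseteq Q$ and nonempty $\Gamma_j\subseteq\text{rhs}_T(q_j,a)$ ($j\in[n]$), where $S_i=\bigcup_j\Gamma_j[x_i]$, and rules $\emptyset(a(x_1,\dots,x_k))\to a(\emptyset(x_1),\dots,\emptyset(x_k))$ for all $a$; for an automaton state $l$, $\text{dom}(l)$ is the set of trees accepted from $l$. Product construction of transducers $T=(Q,\Sigma,\Delta,R,q_0)$ and $T'=(Q',\Delta,\Omega,R',q'_0)$: the transducer with states $Q\times Q'$, initial state $(q_0,q'_0)$, and, for every rule $q(a(x_1,\dots,x_k))\to\xi$ of $T$, every $p\in Q'$ and every tree $\zeta$ derivable from $p(\xi)$ using rules of $T'$ in which the leaves of $\xi$ of the form $q''(x_i)$ are treated as unrewritable symbols and a state $p'$ applied to such a leaf stays as $p'(q''(x_i))$, the rule $(q,p)(a(x_1,\dots,x_k))\to\zeta'$ (said to be obtained from the rule $q(a(x_1,\dots,x_k))\to\xi$ by translating $\xi$ with $p$), where $\zeta'$ replaces each $p'(q''(x_i))$ by $(q'',p')(x_i)$. A top-down tree transducer with look-ahead is a tuple $(Q,\Sigma,\Delta,R,q_0,B)$ where $B$ is a top-down tree automaton over $\Sigma$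 with state set $L$ and rules have the form $q(a(x_1\!:\!l_1,\dots,x_k\!:\!l_k))\to t$ with $l_i\in L$; on input $s$, each node $v$ with label $a\in\Sigma_k$ is first relabeled by $\langle a,l_1,\dots,l_k\rangle$ where $l_i\in L$ are such that the $i$-th subtree of $v$ is in $\text{dom}(l_i)$, and the relabeled tree is then processed reading each rule as $q(\langle a,l_1,\dots,l_k\rangle(x_1,\dots,x_k))\to t$; a state produces $r$ on input $s$ if $r$ is obtainable this way starting from that state. Construction of $M$: let $\hat{T}_1$ be the product construction of $T_1$ and the domain automaton of $T_2$ (states written $(q,S)$ with $q\in Q_1$, $S\subseteq Q_2$), and $N$ the product construction of $\hat{T}_1$ and $T_2$ (states written $(q,S,q')$). The states of $M$ are the $(q,S,q')$ with $q'\in S$; its initial state is $(q_1^0,\{q_2^0\},q_2^0)$; its look-ahead automaton is the domain automaton $\hat{A}$ of $\hat{T}_1$. For every rule $(q,S,q')(a(x_1,\dots,x_k))\to\gamma$ of $N$ involving only such states, obtained from the rule $(q,S)(a(x_1,\dots,x_k))\to\xi$ of $\hat{T}_1$ by translating $\xi$ with $q'$, and for all states $l_1,\dots,l_k$ of $\hat{A}$ with $\xi[x_i]\subseteq l_i$ ($i\in[k]$), $M$ has the rule $(q,S,q')(a(x_1\!:\!l_1,\dots,x_k\!:\!l_k))\to\gamma$. *)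

theory Defs
  imports Main
begin

datatype 'f tree = Node 'f "'f tree list"

text \<open>Trees whose leaves may additionally be variables (used for right-hand sides,
where Var (q, i) stands for q(x_i), and for sentential forms, where Var (q, u) stands
for the state q applied to the (input) tree u).\<close>
datatype ('f, 'v) trm = Var 'v | Fun 'f "('f, 'v) trm list"

fun to_trm :: "'f tree \<Rightarrow> ('f, 'v) trm" where
  "to_trm (Node f ts) = Fun f (map to_trm ts)"

fun subst :: "('v \<Rightarrow> ('f, 'w) trm) \<Rightarrow> ('f, 'v) trm \<Rightarrow> ('f, 'w) trm" where
  "subst \<sigma> (Var v) = \<sigma> v"
| "subst \<sigma> (Fun f ts) = Fun f (map (subst \<sigma>) ts)"

fun ranked :: "('f \<times> nat) set \<Rightarrow> 'f tree \<Rightarrow> bool" where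
  "ranked \<Sigma> (Node f ts) \<longleftrightarrow> (f, length ts) \<in> \<Sigma> \<and> (\<forall>t\<in>set ts. ranked \<Sigma> t)"

text \<open>A rule (q, a, k, xi) stands for q(a(x_1,...,x_k)) -> xi; in xi, Var (q', i) stands
for q'(x_i) (1-based index i).\<close>
record ('q, 'f, 'g) tdtt =
  states :: "'q set"
  inp :: "('f \<times> nat) set"
  outp :: "('g \<times> nat) set"
  rules :: "('q \<times> 'f \<times> nat \<times> ('g, 'q \<times> nat) trm) set"
  init :: 'q

fun wf_rhs :: "('g \<times> nat) set \<Rightarrow> 'q set \<Rightarrow> nat \<Rightarrow> ('g, 'q \<times> nat) trm \<Rightarrow> bool" where
  "wf_rhs \<Delta> Q k (Var (q, i)) \<longleftrightarrow> q \<in> Q \<and> 1 \<le> i \<and> i \<le> k"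
| "wf_rhs \<Delta> Q k (Fun g ts) \<longleftrightarrow> (g, length ts) \<in> \<Delta> \<and> (\<forall>t\<in>set ts. wf_rhs \<Delta> Q k t)"

definition wf_tdtt :: "('q, 'f, 'g) tdtt \<Rightarrow> bool" where
  "wf_tdtt T \<longleftrightarrow> finite (states T) \<and> finite (inp T) \<and> finite (outp T) \<and> finite (rules T)
     \<and> init T \<in> states T
     \<and> (\<forall>(q, a, k, \<xi>) \<in> rules T. q \<in> states T \<and> (a, k) \<in> inp T \<and> wf_rhs (outp T) (states T) k \<xi>)"

text \<open>One rewrite step on sentential forms: Var (q, u) denotes q(u). Only subterms
Var (q, Fun a ss) can be rewritten; Var (q, Var v) is an unrewritable leaf.\<close>
inductive step :: "('q, 'f, 'g) tdtt \<Rightarrow> ('g, 'q \<times> ('f, 'v) trm) trm \<Rightarrow> ('g, 'q \<times> ('f, 'v) trm) trm \<Rightarrow> bool"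
  for T where
  root: "(q, a, length ss, \<xi>) \<in> rules T \<Longrightarrow>
         step T (Var (q, Fun a ss)) (subst (\<lambda>(q', i). Var (q', ss ! (i - 1))) \<xi>)"
| ctxt: "i < length us \<Longrightarrow> step T (us ! i) u' \<Longrightarrow> step T (Fun g us) (Fun g (us[i := u']))"

definition produces :: "('q, 'f, 'g) tdtt \<Rightarrow> 'q \<Rightarrow> 'f tree \<Rightarrow> 'g tree \<Rightarrow> bool" where
  "produces T q s t \<longleftrightarrow> (step T)\<^sup>*\<^sup>* (Var (q, to_trm s :: ('f, unit) trm)) (to_trm t)"

definition rhs_set :: "('q, 'f, 'g) tdtt \<Rightarrow> 'q \<Rightarrow> 'f \<Rightarrow> nat \<Rightarrow> ('g, 'q \<times> nat) trm set" where
  "rhs_set T q a k = {\<xi>. (q, a, k, \<xi>) \<in> rules T}"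

definition vars_at :: "('g, 'q \<times> nat) trm \<Rightarrow> nat \<Rightarrow> 'q set" where
  "vars_at \<xi> i = {q. (q, i) \<in> set2_trm \<xi>}"

definition dom_aut :: "('q, 'f, 'g) tdtt \<Rightarrow> ('q set, 'f, 'f) tdtt" where
  "dom_aut T = \<lparr> states = Pow (states T), inp = inp T, outp = inp T,
     rules = {(S, a, k, Fun a (map (\<lambda>i. Var (\<Union>q\<in>S. \<Union>\<xi>\<in>\<Gamma> q. vars_at \<xi> i, i)) [1..<Suc k]))
               | S a k \<Gamma>. (a, k) \<in> inp T \<and> S \<subseteq> states T \<and> S \<noteq> {}
                   \<and> (\<forall>q\<in>S. \<Gamma> q \<noteq> {} \<and> \<Gamma> q \<subseteq> rhs_set T q a k)}
           \<union> {({}, a, k, Fun a (map (\<lambda>i. Var ({}, i)) [1..<Suc k])) | a k. (a, k) \<in> inp T},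
     init = {init T} \<rparr>"

definition accepts :: "('l, 'f, 'f) tdtt \<Rightarrow> 'l \<Rightarrow> 'f tree \<Rightarrow> bool" where
  "accepts A l s \<longleftrightarrow> produces A l s s"

text \<open>zeta' is obtained from xi by translating with p: some zeta derivable from p(xi) with
leaves q''(x_i) unrewritable equals zeta' with each (q'',p')(x_i) replaced by p'(q''(x_i)).\<close>
definition translates :: "('p, 'g, 'h) tdtt \<Rightarrow> 'p \<Rightarrow> ('g, 'q \<times> nat) trm \<Rightarrow> ('h, ('q \<times> 'p) \<times> nat) trm \<Rightarrow> bool" where
  "translates T' p \<xi> \<zeta>' \<longleftrightarrow>
     (step T')\<^sup>*\<^sup>* (Var (p, \<xi>)) (map_trm (\<lambda>x. x) (\<lambda>((q'', p'), i). (p', Var (q'', i))) \<zeta>')"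

definition product :: "('q, 'f, 'g) tdtt \<Rightarrow> ('p, 'g, 'h) tdtt \<Rightarrow> ('q \<times> 'p, 'f, 'h) tdtt" where
  "product T T' = \<lparr> states = states T \<times> states T', inp = inp T, outp = outp T',
     rules = {((q, p), a, k, \<zeta>') | q p a k \<xi> \<zeta>'.
                (q, a, k, \<xi>) \<in> rules T \<and> p \<in> states T' \<and> translates T' p \<xi> \<zeta>'},
     init = (init T, init T') \<rparr>"

text \<open>The underlying transducer reads symbols (a, [l_1,...,l_k]) of rank k.\<close>
record ('q, 'l, 'f, 'g) la_tdtt =
  la_trans :: "('q, 'f \<times> 'l list, 'g) tdtt"
  la_aut :: "('l, 'f, 'f) tdtt"

inductive relabel :: "('l, 'f, 'f) tdtt \<Rightarrow> 'f tree \<Rightarrow> ('f \<times> 'l list) tree \<Rightarrow> bool" for B where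
  "length ls = length ss \<Longrightarrow> list_all2 (relabel B) ss ss' \<Longrightarrow>
   (\<forall>i<length ss. ls ! i \<in> states B \<and> accepts B (ls ! i) (ss ! i)) \<Longrightarrow>
   relabel B (Node a ss) (Node (a, ls) ss')"

definition produces_la :: "('q, 'l, 'f, 'g) la_tdtt \<Rightarrow> 'q \<Rightarrow> 'f tree \<Rightarrow> 'g tree \<Rightarrow> bool" where
  "produces_la M q s r \<longleftrightarrow> (\<exists>s'. relabel (la_aut M) s s' \<and> produces (la_trans M) q s' r)"

definition T1hat :: "('q1, 'f, 'g) tdtt \<Rightarrow> ('q2, 'g, 'h) tdtt \<Rightarrow> ('q1 \<times> 'q2 set, 'f, 'g) tdtt" where
  "T1hat T1 T2 = product T1 (dom_aut T2)"

definition is_Mstate :: "('q \<times> 'p set) \<times> 'p \<Rightarrow> bool" where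
  "is_Mstate x \<longleftrightarrow> (case x of ((q, S), q') \<Rightarrow> q' \<in> S)"

definition constr_M :: "('q1, 'f, 'g) tdtt \<Rightarrow> ('q2, 'g, 'h) tdtt \<Rightarrow>
    (('q1 \<times> 'q2 set) \<times> 'q2, ('q1 \<times> 'q2 set) set, 'f, 'h) la_tdtt" where
  "constr_M T1 T2 = (let H = T1hat T1 T2; A = dom_aut H; N = product H T2 in
    \<lparr> la_trans = \<lparr> states = {x \<in> states N. is_Mstate x},
        inp = {((a, ls), k) | a ls k. (a, k) \<in> inp H \<and> length ls = k \<and> set ls \<subseteq> states A},
        outp = outp N,
        rules = {(((q, S), q'), (a, ls), k, \<gamma>) | q S q' a k \<xi> \<gamma> ls.
                   (((q, S), q'), a, k, \<gamma>) \<in> rules N \<and>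
                   is_Mstate ((q, S), q') \<and> (\<forall>(x, i) \<in> set2_trm \<gamma>. is_Mstate x) \<and>
                   ((q, S), a, k, \<xi>) \<in> rules H \<and> q' \<in> states T2 \<and> translates T2 q' \<xi> \<gamma> \<and>
                   length ls = k \<and> (\<forall>i<k. ls ! i \<in> states A \<and> vars_at \<xi> (Suc i) \<subseteq> ls ! i)},
        init = ((init T1, {init T2}), init T2) \<rparr>,
      la_aut = A \<rparr>)"

end

theory Submission
  imports Defs
begin

inductive inst :: "('v \<Rightarrow> ('g,'w) trm \<Rightarrow> bool) \<Rightarrow> ('g,'v) trm \<Rightarrow> ('g,'w) trm \<Rightarrow> bool" for E where
  inst_var: "E v w \<Longrightarrow> inst E (Var v) w"
| inst_fun: "list_all2 (inst E) xs ws \<Longrightarrow> inst E (Fun g xs) (Fun g ws)"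

lemma inst_mono[mono]: "(\<And>v w. E v w \<longrightarrow> E' v w) \<Longrightarrow> inst E x y \<longrightarrow> inst E' x y"
proof
  assume h: "\<And>v w. E v w \<longrightarrow> E' v w"
  assume "inst E x y"
  then show "inst E' x y"
    by (induction rule: inst.induct) (auto intro: inst.intros h[rule_format] elim: list_all2_mono)
qed

inductive bs :: "('q,'f,'g) tdtt \<Rightarrow> 'q \<Rightarrow> ('f,'v) trm \<Rightarrow> ('g, 'q \<times> ('f,'v) trm) trm \<Rightarrow> bool" for T where
  bs_var: "bs T q (Var x) (Var (q, Var x))"
| bs_fun: "(q, a, length us, \<xi>) \<in> rules T \<Longrightarrow> inst (\<lambda>v w. bs T (fst v) (us ! (snd v - 1)) w) \<xi> w \<Longrightarrow> bs T q (Fun a us) w"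

inductive_simps inst_simps: "inst E (Var v) w" "inst E (Fun g xs) w"

lemma choice_list: "\<forall>i<n. \<exists>z. P i z \<Longrightarrow> \<exists>zs. length zs = n \<and> (\<forall>i<n. P i (zs!i))"
proof -
  assume h: "\<forall>i<n. \<exists>z. P i z"
  show ?thesis
    by (rule exI[of _ "map (\<lambda>i. SOME z. P i z) [0..<n]"]) (simp add: h someI_ex)
qed

lemma inst_mono_vars: "inst E \<xi> w \<Longrightarrow> \<forall>v\<in>set2_trm \<xi>. \<forall>w. E v w \<longrightarrow> E2 v w \<Longrightarrow> inst E2 \<xi> w"
proof (induction rule: inst.induct)
  case (inst_var v w) then show ?case by (auto intro: inst.intros)
next
  case (inst_fun xs ws g)
  then show ?case
    by (auto intro!: inst.intros simp: list_all2_conv_all_nth) (metis nth_mem)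
qed

lemma inst_to_trm_Fun: "inst E (Fun g xs) (to_trm t) \<longleftrightarrow>
  (\<exists>ts. t = Node g ts \<and> length ts = length xs \<and> (\<forall>i<length xs. inst E (xs!i) (to_trm (ts!i))))"
  by (cases t) (auto simp: inst_simps list_all2_conv_all_nth)

lemma to_trm_Fun_iff: "to_trm t = Fun g ws \<longleftrightarrow> (\<exists>ts. t = Node g ts \<and> ws = map to_trm ts)"
  by (cases t) auto

lemma inst_ex_var: "inst E \<xi> w \<Longrightarrow> v \<in> set2_trm \<xi> \<Longrightarrow> \<exists>w'. E v w'"
proof (induction rule: inst.induct)
  case (inst_var v w) then show ?case by auto
next
  case (inst_fun xs ws g)
  then show ?case by (auto simp: list_all2_conv_all_nth in_set_conv_nth)
qed

lemma inst_ex_var_g: "inst E \<xi> (to_trm t) \<Longrightarrow> v \<in> set2_trm \<xi> \<Longrightarrow> \<exists>t'. E v (to_trm t')"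
proof (induction \<xi> arbitrary: t)
  case (Var x) then show ?case by (auto simp: inst_simps)
next
  case (Fun g xs)
  then show ?case by (auto simp: inst_to_trm_Fun in_set_conv_nth) (metis nth_mem)
qed

lemma inst_mono_g: "inst E \<xi> (to_trm t) \<Longrightarrow> (\<forall>v t'. v \<in> set2_trm \<xi> \<longrightarrow> E v (to_trm t') \<longrightarrow> E2 v (to_trm t'))
   \<Longrightarrow> inst E2 \<xi> (to_trm t)"
proof (induction \<xi> arbitrary: t)
  case (Var x) then show ?case by (auto simp: inst_simps)
next
  case (Fun g xs)
  from Fun.prems(1) obtain ts where t: "t = Node g ts" "length ts = length xs"
    "\<forall>i<length xs. inst E (xs!i) (to_trm (ts!i))" by (auto simp: inst_to_trm_Fun)
  have "\<forall>i<length xs. inst E2 (xs!i) (to_trm (ts!i))"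
  proof (intro allI impI)
    fix i assume i: "i < length xs"
    then have m: "xs!i \<in> set xs" by simp
    then have sub: "set2_trm (xs!i) \<subseteq> set2_trm (Fun g xs)" by auto
    show "inst E2 (xs!i) (to_trm (ts!i))"
      apply (rule Fun.IH[OF m])
      using t(3) i Fun.prems(2) sub by blast+
  qed
  then show ?case using t by (auto simp: inst_simps list_all2_conv_all_nth)
qed

lemma inst_exists_g: "\<forall>v\<in>set2_trm \<rho>. \<exists>t. E v (to_trm t) \<Longrightarrow> \<exists>t. inst E \<rho> (to_trm t)"
proof (induction \<rho>)
  case (Var x) then show ?case by (auto simp: inst_simps)
next
  case (Fun g xs)
  have "\<forall>i<length xs. \<exists>t. inst E (xs!i) (to_trm t)"
    using Fun by (auto dest: nth_mem)
  then obtain ts where "length ts = length xs" "\<forall>i<length xs. inst E (xs!i) (to_trm (ts!i))"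
    using choice_list[of "length xs" "\<lambda>i t. inst E (xs!i) (to_trm t)"] by blast
  then show ?case by (auto simp: inst_to_trm_Fun)
qed

lemma inst_transfer: "inst Ea \<rho> (to_trm r) \<Longrightarrow>
  (\<forall>v t'. v \<in> set2_trm \<rho> \<longrightarrow> Ea v (to_trm t') \<longrightarrow> (\<exists>\<gamma>. Eb v (map_trm (\<lambda>x. x) ff \<gamma>) \<and> inst E \<gamma> (to_trm t')))
  \<Longrightarrow> \<exists>\<gamma>. inst Eb \<rho> (map_trm (\<lambda>x. x) ff \<gamma>) \<and> inst E \<gamma> (to_trm r)"
proof (induction \<rho> arbitrary: r)
  case (Var x)
  then obtain \<gamma> where "Eb x (map_trm (\<lambda>x. x) ff \<gamma>)" "inst E \<gamma> (to_trm r)" by (auto simp: inst_simps)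
  then show ?case by (auto simp: inst_simps)
next
  case (Fun g xs)
  from Fun.prems(1) obtain ts where t: "r = Node g ts" "length ts = length xs"
    "\<forall>i<length xs. inst Ea (xs!i) (to_trm (ts!i))" by (auto simp: inst_to_trm_Fun)
  have "\<forall>i<length xs. \<exists>\<gamma>. inst Eb (xs!i) (map_trm (\<lambda>x. x) ff \<gamma>) \<and> inst E \<gamma> (to_trm (ts!i))"
  proof (intro allI impI)
    fix i assume i: "i < length xs"
    then have m: "xs!i \<in> set xs" by simp
    then have sub: "set2_trm (xs!i) \<subseteq> set2_trm (Fun g xs)" by auto
    show "\<exists>\<gamma>. inst Eb (xs!i) (map_trm (\<lambda>x. x) ff \<gamma>) \<and> inst E \<gamma> (to_trm (ts!i))"
      apply (rule Fun.IH[OF m])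
      using t(3) i Fun.prems(2) sub by blast+
  qed
  then obtain gs where gs: "length gs = length xs"
    "\<forall>i<length xs. inst Eb (xs!i) (map_trm (\<lambda>x. x) ff (gs!i)) \<and> inst E (gs!i) (to_trm (ts!i))"
    using choice_list[of "length xs" "\<lambda>i \<gamma>. inst Eb (xs!i) (map_trm (\<lambda>x. x) ff \<gamma>) \<and> inst E \<gamma> (to_trm (ts!i))"]
    by blast
  show ?case
    apply (rule exI[of _ "Fun g gs"])
    using gs t by (auto simp: inst_simps inst_to_trm_Fun list_all2_conv_all_nth)
qed

lemma inst_subst: "inst E (subst \<sigma> \<xi>) w \<longleftrightarrow> inst (\<lambda>v. inst E (\<sigma> v)) \<xi> w"
proof (induction \<xi> arbitrary: w)
  case (Var x) then show ?case by (simp add: inst_simps)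
next
  case (Fun g xs)
  have "list_all2 (inst E) (map (subst \<sigma>) xs) ws \<longleftrightarrow> list_all2 (inst (\<lambda>v. inst E (\<sigma> v))) xs ws" for ws
    using Fun.IH by (auto simp: list_all2_conv_all_nth dest: nth_mem)
  then show ?case by (simp add: inst_simps)
qed

lemma inst_set2: "inst E \<rho> w \<Longrightarrow> y \<in> set2_trm w \<Longrightarrow> \<exists>v\<in>set2_trm \<rho>. \<exists>w'. E v w' \<and> y \<in> set2_trm w'"
proof (induction rule: inst.induct)
  case (inst_var v w) then show ?case by auto
next
  case (inst_fun xs ws g)
  then show ?case by (fastforce simp: list_all2_conv_all_nth in_set_conv_nth)
qed

lemma inst_refl_g: "inst E (to_trm t) (to_trm t)"
proof (induction t)
  case (Node f ts) then show ?case by (auto simp: inst_simps list_all2_conv_all_nth)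
qed

section \<open>small step vs big step\<close>

definition bss :: "('q,'f,'g) tdtt \<Rightarrow> ('g, 'q \<times> ('f,'v) trm) trm \<Rightarrow> ('g, 'q \<times> ('f,'v) trm) trm \<Rightarrow> bool" where
  "bss T x w = inst (\<lambda>v w. bs T (fst v) (snd v) w) x w"

lemma step_bss: "step T x y \<Longrightarrow> bss T y w \<Longrightarrow> bss T x w"
proof (induction arbitrary: w rule: step.induct)
  case (root q a ss \<xi>)
  have e: "(\<lambda>v. inst (\<lambda>v w. bs T (fst v) (snd v) w) ((\<lambda>(q', i). Var (q', ss ! (i - 1))) v))
        = (\<lambda>v w. bs T (fst v) (ss ! (snd v - 1)) w)"
    by (auto simp: inst_simps fun_eq_iff)
  from root show ?case unfolding bss_def inst_subst e
    by (auto simp: inst_simps intro: bs.bs_fun)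
next
  case (ctxt i us u' g)
  from ctxt.prems obtain ws where ws: "w = Fun g ws" "list_all2 (inst (\<lambda>v w. bs T (fst v) (snd v) w)) (us[i := u']) ws"
    unfolding bss_def by (auto simp: inst_simps)
  have "list_all2 (inst (\<lambda>v w. bs T (fst v) (snd v) w)) us ws"
    using ws(2) ctxt.IH ctxt.hyps unfolding bss_def
    by (auto simp: list_all2_conv_all_nth nth_list_update split: if_splits)
  then show ?case using ws unfolding bss_def by (auto simp: inst_simps)
qed

lemma steps_bss: "(step T)\<^sup>*\<^sup>* x y \<Longrightarrow> bss T y w \<Longrightarrow> bss T x w"
  by (induction rule: converse_rtranclp_induct) (auto intro: step_bss)

lemma final_bss: "\<forall>v\<in>set2_trm w. \<exists>z. snd v = Var z \<Longrightarrow> bss T w w"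
  unfolding bss_def
proof (induction w)
  case (Var x) then show ?case by (cases x) (auto simp: inst_simps intro: bs.bs_var)
next
  case (Fun g xs) then show ?case by (auto simp: inst_simps list_all2_conv_all_nth)
qed

lemma steps_bs: "(step T)\<^sup>*\<^sup>* (Var (q,u)) w \<Longrightarrow> \<forall>v\<in>set2_trm w. \<exists>z. snd v = Var z \<Longrightarrow> bs T q u w"
  using steps_bss[of T "Var (q,u)" w w] final_bss[of w T] by (auto simp: bss_def inst_simps)

lemma steps_Fun_upd: "(step T)\<^sup>*\<^sup>* x y \<Longrightarrow> i < length xs \<Longrightarrow> (step T)\<^sup>*\<^sup>* (Fun g (xs[i:=x])) (Fun g (xs[i:=y]))"
proof (induction rule: rtranclp_induct)
  case base then show ?case by simp
next
  case (step y z)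
  have "step T (Fun g (xs[i:=y])) (Fun g ((xs[i:=y])[i:=z]))"
    by (rule step.ctxt) (use step in auto)
  then show ?case using step by auto
qed

lemma steps_Fun_aux: "list_all2 (step T)\<^sup>*\<^sup>* xs ys \<Longrightarrow> (step T)\<^sup>*\<^sup>* (Fun g (zs @ xs)) (Fun g (zs @ ys))"
proof (induction arbitrary: zs rule: list_all2_induct)
  case Nil then show ?case by simp
next
  case (Cons x xs y ys)
  have "(step T)\<^sup>*\<^sup>* (Fun g ((zs @ x # xs)[length zs := x])) (Fun g ((zs @ x # xs)[length zs := y]))"
    by (rule steps_Fun_upd) (use Cons in auto)
  then have "(step T)\<^sup>*\<^sup>* (Fun g (zs @ x # xs)) (Fun g (zs @ y # xs))" by simp
  also have "(step T)\<^sup>*\<^sup>* (Fun g ((zs @ [y]) @ xs)) (Fun g ((zs @ [y]) @ ys))" by (rule Cons.IH)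
  then have "(step T)\<^sup>*\<^sup>* (Fun g (zs @ y # xs)) (Fun g (zs @ y # ys))" by simp
  finally show ?case .
qed

lemma steps_Fun: "list_all2 (step T)\<^sup>*\<^sup>* xs ys \<Longrightarrow> (step T)\<^sup>*\<^sup>* (Fun g xs) (Fun g ys)"
  using steps_Fun_aux[of T xs ys g "[]"] by simp

lemma inst_steps_subst: "inst (\<lambda>v w. (step T)\<^sup>*\<^sup>* (\<sigma> v) w) \<xi> w \<Longrightarrow> (step T)\<^sup>*\<^sup>* (subst \<sigma> \<xi>) w"
proof (induction \<xi> arbitrary: w)
  case (Var x) then show ?case by (simp add: inst_simps)
next
  case (Fun g xs)
  then obtain ws where "w = Fun g ws" "list_all2 (inst (\<lambda>v w. (step T)\<^sup>*\<^sup>* (\<sigma> v) w)) xs ws"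
    by (auto simp: inst_simps)
  moreover have "list_all2 (step T)\<^sup>*\<^sup>* (map (subst \<sigma>) xs) ws"
    using calculation(2) Fun.IH by (auto simp: list_all2_conv_all_nth dest: nth_mem)
  ultimately show ?case by (auto intro: steps_Fun)
qed

lemma bs_steps: "bs T q u w \<Longrightarrow> (step T)\<^sup>*\<^sup>* (Var (q,u)) w"
proof (induction rule: bs.induct)
  case (bs_var q x) then show ?case by simp
next
  case (bs_fun q a us \<xi> w)
  have "step T (Var (q, Fun a us)) (subst (\<lambda>(q', i). Var (q', us ! (i - 1))) \<xi>)"
    by (rule step.root) (fact bs_fun.hyps)
  moreover have "(step T)\<^sup>*\<^sup>* (subst (\<lambda>(q', i). Var (q', us ! (i - 1))) \<xi>) w"
    apply (rule inst_steps_subst)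
    apply (rule inst_mono_vars[OF bs_fun(2)])
    by auto
  ultimately show ?case by (rule converse_rtranclp_into_rtranclp)
qed


section \<open>ground runs\<close>

definition gbs :: "('q,'f,'g) tdtt \<Rightarrow> 'q \<Rightarrow> 'f tree \<Rightarrow> 'g tree \<Rightarrow> bool" where
  "gbs T q s t \<longleftrightarrow> bs T q (to_trm s :: ('f,unit) trm) (to_trm t)"

definition DD :: "('q,'f,'g) tdtt \<Rightarrow> 'f tree \<Rightarrow> 'q set" where
  "DD T t = {p. \<exists>r. gbs T p t r}"

definition wfr :: "('q,'f,'g) tdtt \<Rightarrow> bool" where
  "wfr T \<longleftrightarrow> (\<forall>(q,a,k,\<rho>)\<in>rules T. \<forall>(q',i)\<in>set2_trm \<rho>. q' \<in> states T \<and> 1 \<le> i \<and> i \<le> k)"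

definition GE :: "('q,'f,'g) tdtt \<Rightarrow> 'f tree list \<Rightarrow> 'q \<times> nat \<Rightarrow> ('g,'w) trm \<Rightarrow> bool" where
  "GE T ts v w \<longleftrightarrow> (\<exists>t'. w = to_trm t' \<and> 1 \<le> snd v \<and> snd v \<le> length ts \<and> fst v \<in> states T
      \<and> gbs T (fst v) (ts ! (snd v - 1)) t')"

definition GI :: "('q,'f,'g) tdtt \<Rightarrow> 'f tree list \<Rightarrow> 'q \<times> nat \<Rightarrow> ('g,'w) trm \<Rightarrow> bool" where
  "GI T ts v w \<longleftrightarrow> (\<exists>t'. w = to_trm t' \<and> 1 \<le> snd v \<and> snd v \<le> length ts
      \<and> gbs T (fst v) (ts ! (snd v - 1)) t')"

inductive_cases bs_VarE: "bs T q (Var x) w"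
inductive_cases bs_FunE: "bs T q (Fun a us) w"

lemma to_trm_inj: "to_trm t = (to_trm t' :: ('f,'v) trm) \<Longrightarrow> t = t'"
proof (induction t arbitrary: t')
  case (Node f ts)
  then show ?case by (cases t') (auto simp: list_eq_iff_nth_eq dest: nth_mem)
qed

lemma set2_to_trm[simp]: "set2_trm (to_trm t) = {}"
  by (induction t) auto

lemma produces_gbs: "produces T q s t \<longleftrightarrow> gbs T q s t"
  unfolding produces_def gbs_def using steps_bs bs_steps by fastforce

lemma wf_rhs_vars: "wf_rhs \<Delta> Q k \<xi> \<Longrightarrow> (q,i) \<in> set2_trm \<xi> \<Longrightarrow> q \<in> Q \<and> 1 \<le> i \<and> i \<le> k"
  by (induction \<Delta> Q k \<xi> rule: wf_rhs.induct) auto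

lemma wf_wfr: "wf_tdtt T \<Longrightarrow> wfr T"
  unfolding wf_tdtt_def wfr_def by (fastforce dest: wf_rhs_vars)

lemma gbs_NodeI: "(q, a, length ss, \<rho>) \<in> rules T \<Longrightarrow> inst (GI T ss) \<rho> (to_trm t) \<Longrightarrow> gbs T q (Node a ss) t"
proof -
  assume r: "(q, a, length ss, \<rho>) \<in> rules T" and i: "inst (GI T ss) \<rho> (to_trm t)"
  have r': "(q, a, length (map to_trm ss :: (_,unit) trm list), \<rho>) \<in> rules T" using r by simp
  have "inst (\<lambda>v w. bs T (fst v) ((map to_trm ss :: (_,unit) trm list) ! (snd v - 1)) w) \<rho> (to_trm t)"
    by (rule inst_mono_g[OF i]) (auto simp: GI_def gbs_def dest: to_trm_inj)
  then show ?thesis unfolding gbs_def by (simp add: bs.bs_fun[OF r'])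
qed

lemma gbs_NodeD: "wfr T \<Longrightarrow> gbs T q (Node a ss) t \<Longrightarrow>
   \<exists>\<rho>. (q, a, length ss, \<rho>) \<in> rules T \<and> inst (GE T ss) \<rho> (to_trm t)"
proof -
  assume w: "wfr T" and g: "gbs T q (Node a ss) t"
  from g obtain \<rho> where r: "(q, a, length ss, \<rho>) \<in> rules T"
    and i: "inst (\<lambda>v w. bs T (fst v) ((map to_trm ss :: (_,unit) trm list) ! (snd v - 1)) w) \<rho> (to_trm t)"
    unfolding gbs_def by (auto elim: bs_FunE)
  have "inst (GE T ss) \<rho> (to_trm t)"
  proof (rule inst_mono_g[OF i], intro allI impI)
    fix v t' assume v: "v \<in> set2_trm \<rho>" and b: "bs T (fst v) ((map to_trm ss :: (_,unit) trm list) ! (snd v - 1)) (to_trm t')"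
    obtain q' i where vv: "v = (q', i)" by (cases v)
    have "q' \<in> states T \<and> 1 \<le> i \<and> i \<le> length ss" using w r v vv unfolding wfr_def by fastforce
    then show "GE T ss v (to_trm t')" using b vv by (auto simp: GE_def gbs_def)
  qed
  then show ?thesis using r by blast
qed

lemma GE_GI: "GE T ts v w \<Longrightarrow> GI T ts v w"
  unfolding GE_def GI_def by auto

lemma inst_ranked: "inst E \<xi> (to_trm t) \<Longrightarrow> wf_rhs \<Delta> Q k \<xi> \<Longrightarrow>
  (\<forall>v t'. v \<in> set2_trm \<xi> \<longrightarrow> E v (to_trm t') \<longrightarrow> ranked \<Delta> t') \<Longrightarrow> ranked \<Delta> t"
proof (induction \<xi> arbitrary: t)
  case (Var x) then show ?case by (cases x) (auto simp: inst_simps)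
next
  case (Fun g xs)
  from Fun.prems(1) obtain ts where t: "t = Node g ts" "length ts = length xs"
    "\<forall>i<length xs. inst E (xs!i) (to_trm (ts!i))" by (auto simp: inst_to_trm_Fun)
  have "ranked \<Delta> (ts!i)" if i: "i < length xs" for i
  proof -
    have m: "xs!i \<in> set xs" using i by simp
    then have sub: "set2_trm (xs!i) \<subseteq> set2_trm (Fun g xs)" by auto
    show ?thesis
      apply (rule Fun.IH[OF m])
      using t(3) i Fun.prems(2,3) sub m by (auto) (meson m)
  qed
  then show ?case using t Fun.prems(2) by (auto simp: in_set_conv_nth)
qed

lemma gbs_ranked: "wf_tdtt T \<Longrightarrow> gbs T q s t \<Longrightarrow> ranked (outp T) t"
proof (induction s arbitrary: q t)
  case (Node a ss)
  from gbs_NodeD[OF wf_wfr[OF Node.prems(1)] Node.prems(2)] obtain \<rho> where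
    r: "(q, a, length ss, \<rho>) \<in> rules T" "inst (GE T ss) \<rho> (to_trm t)" by blast
  have w: "wf_rhs (outp T) (states T) (length ss) \<rho>"
    using r(1) Node.prems(1) unfolding wf_tdtt_def by fastforce
  show ?case
  proof (rule inst_ranked[OF r(2) w], intro allI impI)
    fix v t' assume "v \<in> set2_trm \<rho>" "GE T ss v (to_trm t')"
    then have "1 \<le> snd v" "snd v \<le> length ss"
      "gbs T (fst v) (ss ! (snd v - 1)) t'" unfolding GE_def by (auto dest: to_trm_inj)
    moreover have "ss ! (snd v - 1) \<in> set ss" using calculation by auto
    ultimately show "ranked (outp T) t'" using Node.IH[of "ss ! (snd v - 1)" "fst v" t'] Node.prems(1) by blast
  qed
qed

section \<open>domain automaton\<close>

definition domrhs :: "'f \<Rightarrow> nat \<Rightarrow> (nat \<Rightarrow> 'l) \<Rightarrow> ('f, 'l \<times> nat) trm" where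
  "domrhs a n F = Fun a (map (\<lambda>i. Var (F i, i)) [1..<Suc n])"

lemma dom_simps[simp]: "states (dom_aut T) = Pow (states T)" "inp (dom_aut T) = inp T"
  by (auto simp: dom_aut_def)

lemma dom_rule: "(a,n) \<in> inp T \<Longrightarrow> L \<subseteq> states T \<Longrightarrow> (\<forall>h\<in>L. \<Gamma> h \<noteq> {} \<and> \<Gamma> h \<subseteq> rhs_set T h a n) \<Longrightarrow>
  (L, a, n, domrhs a n (\<lambda>i. \<Union>h\<in>L. \<Union>\<rho>\<in>\<Gamma> h. vars_at \<rho> i)) \<in> rules (dom_aut T)"
proof (cases "L = {}")
  case True
  assume "(a,n) \<in> inp T"
  then show ?thesis using True by (auto simp: dom_aut_def domrhs_def)
next
  case False
  assume "(a,n) \<in> inp T" "L \<subseteq> states T" "\<forall>h\<in>L. \<Gamma> h \<noteq> {} \<and> \<Gamma> h \<subseteq> rhs_set T h a n"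
  then show ?thesis using False unfolding dom_aut_def domrhs_def by simp blast
qed

lemma dom_rule_cases: "(L, a, n, \<rho>) \<in> rules (dom_aut T) \<Longrightarrow> \<exists>\<Gamma>.
   \<rho> = domrhs a n (\<lambda>i. \<Union>h\<in>L. \<Union>\<rho>\<in>\<Gamma> h. vars_at \<rho> i) \<and> (a,n) \<in> inp T \<and> L \<subseteq> states T \<and>
   (\<forall>h\<in>L. \<Gamma> h \<noteq> {} \<and> \<Gamma> h \<subseteq> rhs_set T h a n)"
  unfolding dom_aut_def domrhs_def
  apply (simp del: upt_Suc)
  apply (erule disjE)
   apply (elim exE conjE)
   apply (rule_tac x=\<Gamma> in exI)
   apply (simp del: upt_Suc)
  apply (rule_tac x="\<lambda>_. {}" in exI)
  by (auto simp del: upt_Suc)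

lemma inst_domrhs: "inst E (domrhs a n F) w \<longleftrightarrow>
  (\<exists>ws. w = Fun a ws \<and> length ws = n \<and> (\<forall>j<n. E (F (Suc j), Suc j) (ws!j)))"
  unfolding domrhs_def by (auto simp del: upt_Suc simp: inst_simps list_all2_conv_all_nth)

lemma wfr_dom: "wfr T \<Longrightarrow> wfr (dom_aut T)"
  unfolding wfr_def
  apply (clarsimp)
  apply (drule dom_rule_cases)
  apply (clarsimp simp del: upt_Suc simp: domrhs_def vars_at_def rhs_set_def)
  by fastforce

lemma Gamma_vars: "inst (GE T ts) \<rho> (to_trm r) \<Longrightarrow> p' \<in> vars_at \<rho> i \<Longrightarrow>
   p' \<in> states T \<and> 1 \<le> i \<and> i \<le> length ts \<and> p' \<in> DD T (ts!(i-1))"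
  unfolding vars_at_def DD_def by (auto dest!: inst_ex_var_g simp: GE_def)


lemma Gamma_lemma:
  assumes w: "wfr T" and a: "(g, length ts) \<in> inp T" and S: "S \<subseteq> states T" "S \<subseteq> DD T (Node g ts)"
  shows "\<exists>F. (S, g, length ts, domrhs g (length ts) F) \<in> rules (dom_aut T)
     \<and> (\<forall>j < length ts. F (Suc j) \<subseteq> states T \<and> F (Suc j) \<subseteq> DD T (ts!j))
     \<and> (\<forall>p r. p \<in> S \<longrightarrow> gbs T p (Node g ts) r \<longrightarrow> (\<exists>\<rho>. (p,g,length ts,\<rho>) \<in> rules T
          \<and> inst (GE T ts) \<rho> (to_trm r :: (_,unit) trm) \<and> (\<forall>p' j. (p',j) \<in> set2_trm \<rho> \<longrightarrow> p' \<in> F j)))"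
proof -
  define \<Gamma> where "\<Gamma> p = {\<rho>. (p,g,length ts,\<rho>) \<in> rules T \<and> (\<exists>r. inst (GE T ts) \<rho> (to_trm r :: (_,unit) trm))}" for p
  define F where "F i = (\<Union>p\<in>S. \<Union>\<rho>\<in>\<Gamma> p. vars_at \<rho> i)" for i
  have ne: "\<forall>p\<in>S. \<Gamma> p \<noteq> {} \<and> \<Gamma> p \<subseteq> rhs_set T p g (length ts)"
  proof
    fix p assume "p \<in> S"
    then obtain r where "gbs T p (Node g ts) r" using S unfolding DD_def by auto
    from gbs_NodeD[OF w this] show "\<Gamma> p \<noteq> {} \<and> \<Gamma> p \<subseteq> rhs_set T p g (length ts)"
      unfolding \<Gamma>_def rhs_set_def by blast
  qed
  have "(S, g, length ts, domrhs g (length ts) F) \<in> rules (dom_aut T)"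
    unfolding F_def by (rule dom_rule[OF a S(1) ne])
  moreover have "\<forall>j < length ts. F (Suc j) \<subseteq> states T \<and> F (Suc j) \<subseteq> DD T (ts!j)"
    unfolding F_def \<Gamma>_def using Gamma_vars by fastforce
  moreover have "\<forall>p r. p \<in> S \<longrightarrow> gbs T p (Node g ts) r \<longrightarrow> (\<exists>\<rho>. (p,g,length ts,\<rho>) \<in> rules T
          \<and> inst (GE T ts) \<rho> (to_trm r :: (_,unit) trm) \<and> (\<forall>p' j. (p',j) \<in> set2_trm \<rho> \<longrightarrow> p' \<in> F j))"
  proof (intro allI impI)
    fix p r assume p: "p \<in> S" "gbs T p (Node g ts) r"
    from gbs_NodeD[OF w p(2)] obtain \<rho> where r: "(p,g,length ts,\<rho>) \<in> rules T"
      "inst (GE T ts) \<rho> (to_trm r :: (_,unit) trm)" by blast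
    then have "\<rho> \<in> \<Gamma> p" unfolding \<Gamma>_def by blast
    then have "\<forall>p' j. (p',j) \<in> set2_trm \<rho> \<longrightarrow> p' \<in> F j" unfolding F_def vars_at_def using p(1) by blast
    then show "\<exists>\<rho>. (p,g,length ts,\<rho>) \<in> rules T
          \<and> inst (GE T ts) \<rho> (to_trm r :: (_,unit) trm) \<and> (\<forall>p' j. (p',j) \<in> set2_trm \<rho> \<longrightarrow> p' \<in> F j)"
      using r by blast
  qed
  ultimately show ?thesis by blast
qed

lemma Acc:
  assumes w: "wfr T"
  shows "ranked (inp T) u \<Longrightarrow> L \<subseteq> states T \<Longrightarrow> L \<subseteq> DD T u \<Longrightarrow> gbs (dom_aut T) L u u"
proof (induction u arbitrary: L)
  case (Node a us)
  have a: "(a, length us) \<in> inp T" using Node.prems(1) by simp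
  from Gamma_lemma[OF w a Node.prems(2,3)] obtain F where
    F: "(L, a, length us, domrhs a (length us) F) \<in> rules (dom_aut T)"
       "\<forall>j < length us. F (Suc j) \<subseteq> states T \<and> F (Suc j) \<subseteq> DD T (us!j)" by blast
  have ch: "gbs (dom_aut T) (F (Suc j)) (us!j) (us!j)" if j: "j < length us" for j
    apply (rule Node.IH)
    using j Node.prems(1) F(2) by auto
  show ?case
    apply (rule gbs_NodeI[OF F(1)])
    using ch by (auto simp: inst_domrhs GI_def)
qed

definition EA :: "('a \<times> nat \<Rightarrow> ('g,'w) trm \<Rightarrow> bool) \<Rightarrow> ('q,'g,'h) tdtt \<Rightarrow> ('a \<times> 'q set) \<times> nat \<Rightarrow> ('g,'w) trm \<Rightarrow> bool" where
  "EA E1 T v w \<longleftrightarrow> (\<exists>t'. w = to_trm t' \<and> E1 (fst (fst v), snd v) w \<and> snd (fst v) \<subseteq> states T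
     \<and> snd (fst v) \<subseteq> DD T t' \<and> ranked (inp T) t')"

definition EB :: "('a \<times> nat \<Rightarrow> ('g,'w) trm \<Rightarrow> bool) \<Rightarrow> ('q,'g,'h) tdtt \<Rightarrow> (('a \<times> 'q set) \<times> 'q) \<times> nat \<Rightarrow> ('h,'u) trm \<Rightarrow> bool" where
  "EB E1 T v w \<longleftrightarrow> (\<exists>t' r'. w = to_trm r' \<and> EA E1 T (fst (fst v), snd v) (to_trm t')
     \<and> snd (fst v) \<in> snd (fst (fst v)) \<and> gbs T (snd (fst v)) t' r')"

definition ED :: "('a \<times> nat \<Rightarrow> ('g,'w) trm \<Rightarrow> bool) \<Rightarrow> ('q,'g,'h) tdtt \<Rightarrow> ('a \<times> 'q set) \<times> nat \<Rightarrow> ('g,'w) trm \<Rightarrow> bool" where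
  "ED E1 T v w \<longleftrightarrow> (\<exists>t'. w = to_trm t' \<and> E1 (fst (fst v), snd v) w \<and> snd (fst v) \<subseteq> DD T t')"

lemma DS:
  fixes \<xi>1 :: "('g, 'a \<times> nat) trm"
  assumes w: "wfr T"
  shows "bs (dom_aut T) S \<xi>1 (map_trm (\<lambda>x. x) (\<lambda>((q'', p'), i). (p', Var (q'', i))) \<zeta>) \<Longrightarrow>
    inst (ED E1 T) \<zeta> (to_trm t) \<Longrightarrow> inst E1 \<xi>1 (to_trm t) \<and> S \<subseteq> DD T t"
proof (induction \<xi>1 arbitrary: S \<zeta> t)
  case (Var x)
  from Var.prems(1) have m: "map_trm (\<lambda>x. x) (\<lambda>((q'', p'), i). (p', Var (q'', i))) \<zeta> = Var (S, (Var x :: ('g, 'a \<times> nat) trm))"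
    by (rule bs.cases) auto
  then obtain z where z: "\<zeta> = Var z" by (cases \<zeta>) auto
  obtain a b c where zz: "z = ((a,b),c)" by (cases z) auto
  have "b = S" "x = (a,c)" using m z zz by auto
  then show ?case using Var.prems(2) z zz by (auto simp: inst_simps ED_def dest: to_trm_inj)
next
  case (Fun g xs)
  from Fun.prems(1) obtain \<rho>B where rB: "(S, g, length xs, \<rho>B) \<in> rules (dom_aut T)"
    "inst (\<lambda>v w. bs (dom_aut T) (fst v) (xs ! (snd v - 1)) w) \<rho>B
       (map_trm (\<lambda>x. x) (\<lambda>((q'', p'), i). (p', Var (q'', i))) \<zeta>)"
    by (auto elim: bs_FunE)
  from dom_rule_cases[OF rB(1)] obtain \<Gamma> where G: "\<rho>B = domrhs g (length xs) (\<lambda>i. \<Union>h\<in>S. \<Union>\<rho>\<in>\<Gamma> h. vars_at \<rho> i)"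
    "(g, length xs) \<in> inp T" "S \<subseteq> states T" "\<forall>h\<in>S. \<Gamma> h \<noteq> {} \<and> \<Gamma> h \<subseteq> rhs_set T h g (length xs)"
    by blast
  define F where "F i = (\<Union>h\<in>S. \<Union>\<rho>\<in>\<Gamma> h. vars_at \<rho> i)" for i
  from rB(2) G(1) obtain ws where ws: "map_trm (\<lambda>x. x) (\<lambda>((q'', p'), i). (p', Var (q'', i))) \<zeta> = Fun g ws"
    "length ws = length xs" "\<forall>j<length xs. bs (dom_aut T) (F (Suc j)) (xs ! j) (ws ! j)"
    unfolding F_def by (auto simp: inst_domrhs)
  then obtain \<zeta>s where zs: "\<zeta> = Fun g \<zeta>s" "ws = map (map_trm (\<lambda>x. x) (\<lambda>((q'', p'), i). (p', Var (q'', i)))) \<zeta>s"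
    by (cases \<zeta>) auto
  from Fun.prems(2) zs obtain ts where ts: "t = Node g ts" "length ts = length \<zeta>s"
    "\<forall>j<length \<zeta>s. inst (ED E1 T) (\<zeta>s!j) (to_trm (ts!j))" by (auto simp: inst_to_trm_Fun)
  have len: "length \<zeta>s = length xs" "length ts = length xs" using ws zs ts by auto
  have IH: "inst E1 (xs!j) (to_trm (ts!j)) \<and> F (Suc j) \<subseteq> DD T (ts!j)" if j: "j < length xs" for j
    apply (rule Fun.IH[of "xs!j" "F (Suc j)" "\<zeta>s!j"])
    using j ws zs ts len by auto
  have c1: "inst E1 (Fun g xs) (to_trm t)"
    using IH len ts by (auto simp: inst_simps list_all2_conv_all_nth)
  have c2: "S \<subseteq> DD T t"
  proof
    fix p assume p: "p \<in> S"
    then obtain \<rho> where \<rho>: "\<rho> \<in> \<Gamma> p" using G(4) by blast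
    then have r: "(p, g, length ts, \<rho>) \<in> rules T" using G(4) p len unfolding rhs_set_def by auto
    have "\<forall>v\<in>set2_trm \<rho>. \<exists>t'. GI T ts v (to_trm t' :: (_,unit) trm)"
    proof
      fix v assume v: "v \<in> set2_trm \<rho>"
      obtain p' j where vv: "v = (p', j)" by (cases v)
      have rng: "1 \<le> j" "j \<le> length ts" using w r v vv unfolding wfr_def by fastforce+
      have "p' \<in> F (Suc (j - 1))" using rng p \<rho> v vv unfolding F_def vars_at_def by auto
      moreover have "j - 1 < length xs" using rng len by auto
      ultimately have "p' \<in> DD T (ts ! (j-1))" using IH[of "j-1"] by auto
      then show "\<exists>t'. GI T ts v (to_trm t' :: (_,unit) trm)" using rng vv unfolding GI_def DD_def by auto
    qed
    from inst_exists_g[OF this] obtain r' where "inst (GI T ts) \<rho> (to_trm r' :: (_,unit) trm)" by blast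
    from gbs_NodeI[OF r this] show "p \<in> DD T t" using ts unfolding DD_def by auto
  qed
  show ?case using c1 c2 by blast
qed


lemma DA:
  fixes \<xi>1 :: "('g, 'a \<times> nat) trm" and T :: "('q,'g,'h) tdtt"
  assumes w: "wfr T"
  shows "inst E1 \<xi>1 (to_trm t) \<Longrightarrow> S \<subseteq> states T \<Longrightarrow> S \<subseteq> DD T t \<Longrightarrow> ranked (inp T) t \<Longrightarrow>
   \<exists>\<zeta>. bs (dom_aut T) S \<xi>1 (map_trm (\<lambda>x. x) (\<lambda>((q'', p'), i). (p', Var (q'', i))) \<zeta>)
     \<and> inst (EA E1 T) \<zeta> (to_trm t)
     \<and> (\<forall>p r. p \<in> S \<longrightarrow> gbs T p t r \<longrightarrow> (\<exists>\<gamma>. bs T p \<zeta> (map_trm (\<lambda>x. x) (\<lambda>((h, p'), i). (p', Var (h, i))) \<gamma>)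
            \<and> inst (EB E1 T) \<gamma> (to_trm r :: ('h, 'u) trm)))"
proof (induction \<xi>1 arbitrary: S t)
  case (Var x)
  obtain q'' i where x: "x = (q'', i)" by (cases x)
  from Var.prems(1) have e1: "E1 x (to_trm t)" by (simp add: inst_simps)
  show ?case
  proof (intro exI[of _ "Var ((q'', S), i)"] conjI allI impI)
    show "bs (dom_aut T) S (Var x) (map_trm (\<lambda>x. x) (\<lambda>((q'', p'), i). (p', Var (q'', i))) (Var ((q'', S), i)))"
      using x by (simp add: bs.bs_var)
    show "inst (EA E1 T) (Var ((q'', S), i)) (to_trm t)"
      using e1 x Var.prems by (auto simp: inst_simps EA_def)
    fix p r assume pr: "p \<in> S" "gbs T p t r"
    show "\<exists>\<gamma>. bs T p (Var ((q'', S), i)) (map_trm (\<lambda>x. x) (\<lambda>((h, p'), i). (p', Var (h, i))) \<gamma>)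
            \<and> inst (EB E1 T) \<gamma> (to_trm r :: ('h, 'u) trm)"
      apply (rule exI[of _ "Var (((q'', S), p), i)"])
      using e1 x Var.prems pr by (auto simp: inst_simps EB_def EA_def intro: bs.bs_var)
  qed
next
  case (Fun g xs)
  from Fun.prems(1) obtain ts where ts: "t = Node g ts" "length ts = length xs"
    "\<forall>j<length xs. inst E1 (xs!j) (to_trm (ts!j))" by (auto simp: inst_to_trm_Fun)
  have a: "(g, length ts) \<in> inp T" and rk: "\<forall>j<length ts. ranked (inp T) (ts!j)"
    using Fun.prems(4) ts by auto
  from Gamma_lemma[OF w a Fun.prems(2)] Fun.prems(3) ts obtain F where
    F: "(S, g, length ts, domrhs g (length ts) F) \<in> rules (dom_aut T)"
       "\<forall>j < length ts. F (Suc j) \<subseteq> states T \<and> F (Suc j) \<subseteq> DD T (ts!j)"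
       "\<forall>p r. p \<in> S \<longrightarrow> gbs T p (Node g ts) r \<longrightarrow> (\<exists>\<rho>. (p,g,length ts,\<rho>) \<in> rules T
          \<and> inst (GE T ts) \<rho> (to_trm r :: (_,unit) trm) \<and> (\<forall>p' j. (p',j) \<in> set2_trm \<rho> \<longrightarrow> p' \<in> F j))"
    by blast
  define P where "P j \<zeta> \<longleftrightarrow> bs (dom_aut T) (F (Suc j)) (xs!j) (map_trm (\<lambda>x. x) (\<lambda>((q'', p'), i). (p', Var (q'', i))) \<zeta>)
     \<and> inst (EA E1 T) \<zeta> (to_trm (ts!j))
     \<and> (\<forall>p r. p \<in> F (Suc j) \<longrightarrow> gbs T p (ts!j) r \<longrightarrow> (\<exists>\<gamma>. bs T p \<zeta> (map_trm (\<lambda>x. x) (\<lambda>((h, p'), i). (p', Var (h, i))) \<gamma>)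
            \<and> inst (EB E1 T) \<gamma> (to_trm r :: ('h, 'u) trm)))" for j \<zeta>
  have "\<forall>j<length xs. \<exists>\<zeta>. P j \<zeta>"
  proof (intro allI impI)
    fix j assume j: "j < length xs"
    show "\<exists>\<zeta>. P j \<zeta>" unfolding P_def
      apply (rule Fun.IH)
      using j ts F(2) rk by auto
  qed
  from choice_list[OF this] obtain \<zeta>s where zs: "length \<zeta>s = length xs" "\<forall>j<length xs. P j (\<zeta>s!j)"
    by blast
  show ?case
  proof (intro exI[of _ "Fun g \<zeta>s"] conjI allI impI)
    have r: "(S, g, length xs, domrhs g (length ts) F) \<in> rules (dom_aut T)" using F(1) ts by simp
    show "bs (dom_aut T) S (Fun g xs) (map_trm (\<lambda>x. x) (\<lambda>((q'', p'), i). (p', Var (q'', i))) (Fun g \<zeta>s))"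
      apply simp
      apply (rule bs.bs_fun[OF r])
      using zs ts unfolding P_def by (auto simp: inst_domrhs)
    show "inst (EA E1 T) (Fun g \<zeta>s) (to_trm t)"
      using zs ts unfolding P_def by (auto simp: inst_simps list_all2_conv_all_nth)
    fix p r assume pr: "p \<in> S" "gbs T p t r"
    from F(3) pr ts obtain \<rho> where \<rho>: "(p,g,length ts,\<rho>) \<in> rules T"
      "inst (GE T ts) \<rho> (to_trm r :: (_,unit) trm)" "\<forall>p' j. (p',j) \<in> set2_trm \<rho> \<longrightarrow> p' \<in> F j"
      by blast
    have "\<exists>\<gamma>. inst (\<lambda>v w. bs T (fst v) (\<zeta>s ! (snd v - 1)) w) \<rho> (map_trm (\<lambda>x. x) (\<lambda>((h, p'), i). (p', Var (h, i))) \<gamma>)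
         \<and> inst (EB E1 T) \<gamma> (to_trm r :: ('h, 'u) trm)"
    proof (rule inst_transfer[OF \<rho>(2)], intro allI impI)
      fix v t' assume v: "v \<in> set2_trm \<rho>" "GE T ts v (to_trm t')"
      obtain p' j where vv: "v = (p', j)" by (cases v)
      have rng: "1 \<le> j" "j \<le> length ts" and g: "gbs T p' (ts ! (j-1)) t'"
        using v vv unfolding GE_def by (auto dest: to_trm_inj)
      have pF: "p' \<in> F (Suc (j-1))" using \<rho>(3) v vv rng by auto
      have jl: "j - 1 < length xs" using rng ts by auto
      from zs(2) jl have "P (j-1) (\<zeta>s ! (j-1))" by blast
      then obtain \<gamma> where "bs T p' (\<zeta>s!(j-1)) (map_trm (\<lambda>x. x) (\<lambda>((h, p'), i). (p', Var (h, i))) \<gamma>)"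
        "inst (EB E1 T) \<gamma> (to_trm t' :: ('h, 'u) trm)"
        unfolding P_def using pF g by blast
      then show "\<exists>\<gamma>. (\<lambda>v w. bs T (fst v) (\<zeta>s ! (snd v - 1)) w) v (map_trm (\<lambda>x. x) (\<lambda>((h, p'), i). (p', Var (h, i))) \<gamma>)
         \<and> inst (EB E1 T) \<gamma> (to_trm t' :: ('h, 'u) trm)" using vv by auto
    qed
    then obtain \<gamma> where \<gamma>: "inst (\<lambda>v w. bs T (fst v) (\<zeta>s ! (snd v - 1)) w) \<rho> (map_trm (\<lambda>x. x) (\<lambda>((h, p'), i). (p', Var (h, i))) \<gamma>)"
         "inst (EB E1 T) \<gamma> (to_trm r :: ('h, 'u) trm)" by blast
    have r2: "(p, g, length \<zeta>s, \<rho>) \<in> rules T" using \<rho>(1) zs ts by simp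
    show "\<exists>\<gamma>. bs T p (Fun g \<zeta>s) (map_trm (\<lambda>x. x) (\<lambda>((h, p'), i). (p', Var (h, i))) \<gamma>)
            \<and> inst (EB E1 T) \<gamma> (to_trm r :: ('h, 'u) trm)"
      using bs.bs_fun[OF r2 \<gamma>(1)] \<gamma>(2) by blast
  qed
qed


section \<open>H = T1hat\<close>

lemma bs_vars:
  assumes w: "wfr T"
  shows "bs T p u w \<Longrightarrow> p \<in> states T \<Longrightarrow> (p', x) \<in> set2_trm w \<Longrightarrow> p' \<in> states T \<and> (\<forall>z. x = Var z \<longrightarrow> z \<in> set2_trm u)"
proof (induction rule: bs.induct)
  case (bs_var q x) then show ?case by auto
next
  case (bs_fun q a us \<xi> w)
  from inst_set2[OF bs_fun(2) bs_fun(4)] obtain v w' where vw: "v \<in> set2_trm \<xi>"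
    "bs T (fst v) (us ! (snd v - 1)) w'"
    "fst v \<in> states T \<longrightarrow> (p', x) \<in> set2_trm w' \<longrightarrow> p' \<in> states T \<and> (\<forall>z. x = Var z \<longrightarrow> z \<in> set2_trm (us ! (snd v - 1)))"
    "(p', x) \<in> set2_trm w'" by blast
  obtain q' i where vv: "v = (q', i)" by (cases v)
  have "q' \<in> states T \<and> 1 \<le> i \<and> i \<le> length us" using w bs_fun(1) vw(1) vv unfolding wfr_def by fastforce
  then have "us ! (i - 1) \<in> set us" "q' \<in> states T" by auto
  then show ?case using vw vv by auto
qed

lemma final_map: "\<forall>v\<in>set2_trm (map_trm (\<lambda>x. x) (\<lambda>((q'', p'), i). (p', Var (q'', i))) \<zeta>). \<exists>z. snd v = Var z"
  by (auto simp: trm.set_map)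

lemma translates_bs: "translates T p \<xi> \<zeta> \<longleftrightarrow> bs T p \<xi> (map_trm (\<lambda>x. x) (\<lambda>((q'', p'), i). (p', Var (q'', i))) \<zeta>)"
  unfolding translates_def
  apply (rule iffI)
   apply (erule steps_bs, rule final_map)
  by (erule bs_steps)

lemma H_simps[simp]: "states (T1hat T1 T2) = states T1 \<times> Pow (states T2)" "inp (T1hat T1 T2) = inp T1"
  by (auto simp: T1hat_def product_def)

lemma H_rules: "((q,S),a,k,\<zeta>) \<in> rules (T1hat T1 T2) \<longleftrightarrow>
   (\<exists>\<xi>1. (q,a,k,\<xi>1) \<in> rules T1 \<and> S \<subseteq> states T2 \<and> translates (dom_aut T2) S \<xi>1 \<zeta>)"
  by (auto simp: T1hat_def product_def)

lemma wfr_H: "wf_tdtt T1 \<Longrightarrow> wf_tdtt T2 \<Longrightarrow> wfr (T1hat T1 T2)"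
  unfolding wfr_def
proof (clarify)
  fix q S a k \<zeta> q'' S'' i
  assume w: "wf_tdtt T1" "wf_tdtt T2" and r: "((q, S), a, k, \<zeta>) \<in> rules (T1hat T1 T2)"
    and v: "((q'', S''), i) \<in> set2_trm \<zeta>"
  from r obtain \<xi>1 where x: "(q,a,k,\<xi>1) \<in> rules T1" "S \<subseteq> states T2" "translates (dom_aut T2) S \<xi>1 \<zeta>"
    by (auto simp: H_rules)
  have b: "bs (dom_aut T2) S \<xi>1 (map_trm (\<lambda>x. x) (\<lambda>((q'', p'), i). (p', Var (q'', i))) \<zeta>)"
    using x(3) by (simp add: translates_bs)
  have "(S'', Var (q'', i)) \<in> set2_trm (map_trm (\<lambda>x. x) (\<lambda>((q'', p'), i). (p', Var (q'', i))) \<zeta>)"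
    using v by (force simp: trm.set_map)
  from bs_vars[OF wfr_dom[OF wf_wfr[OF w(2)]] b _ this] x(2)
  have "S'' \<subseteq> states T2" "(q'', i) \<in> set2_trm \<xi>1" by auto
  moreover have "wf_rhs (outp T1) (states T1) k \<xi>1" using x(1) w(1) unfolding wf_tdtt_def by fastforce
  ultimately show "(q'', S'') \<in> states (T1hat T1 T2) \<and> 1 \<le> i \<and> i \<le> k"
    using wf_rhs_vars by fastforce
qed

lemma H_sound:
  assumes w1: "wf_tdtt T1" and w2: "wf_tdtt T2"
  shows "gbs (T1hat T1 T2) (q,S) s t \<Longrightarrow> gbs T1 q s t \<and> S \<subseteq> DD T2 t"
proof (induction s arbitrary: q S t)
  case (Node a ss)
  from gbs_NodeD[OF wfr_H[OF w1 w2] Node.prems] obtain \<zeta> where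
    z: "((q,S),a,length ss,\<zeta>) \<in> rules (T1hat T1 T2)" "inst (GE (T1hat T1 T2) ss) \<zeta> (to_trm t :: (_,unit) trm)"
    by blast
  from z(1) obtain \<xi>1 where x: "(q,a,length ss,\<xi>1) \<in> rules T1" "S \<subseteq> states T2" "translates (dom_aut T2) S \<xi>1 \<zeta>"
    by (auto simp: H_rules)
  have b: "bs (dom_aut T2) S \<xi>1 (map_trm (\<lambda>x. x) (\<lambda>((q'', p'), i). (p', Var (q'', i))) \<zeta>)"
    using x(3) by (simp add: translates_bs)
  have "inst (ED (GE T1 ss) T2) \<zeta> (to_trm t :: (_,unit) trm)"
  proof (rule inst_mono_g[OF z(2)], intro allI impI)
    fix v t' assume v: "v \<in> set2_trm \<zeta>" "GE (T1hat T1 T2) ss v (to_trm t' :: (_,unit) trm)"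
    obtain q'' S'' i where vv: "v = ((q'',S''),i)" by (metis prod.exhaust)
    have g: "1 \<le> i" "i \<le> length ss" "q'' \<in> states T1" "gbs (T1hat T1 T2) (q'',S'') (ss!(i-1)) t'"
      using v vv unfolding GE_def by (auto dest: to_trm_inj)
    have "ss!(i-1) \<in> set ss" using g by auto
    from Node.IH[OF this g(4)] g
    show "ED (GE T1 ss) T2 v (to_trm t')" using vv by (auto simp: ED_def GE_def)
  qed
  from DS[OF wf_wfr[OF w2] b this] have d: "inst (GE T1 ss) \<xi>1 (to_trm t :: (_,unit) trm)" "S \<subseteq> DD T2 t" by auto
  have "inst (GI T1 ss) \<xi>1 (to_trm t :: (_,unit) trm)"
    by (rule inst_mono_g[OF d(1)]) (auto intro: GE_GI)
  from gbs_NodeI[OF x(1) this] d(2) show ?case by blast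
qed

lemma H_complete:
  assumes w1: "wf_tdtt T1" and w2: "wf_tdtt T2" and io: "inp T2 = outp T1"
  shows "gbs T1 q s t \<Longrightarrow> S \<subseteq> states T2 \<Longrightarrow> S \<subseteq> DD T2 t \<Longrightarrow> gbs (T1hat T1 T2) (q,S) s t"
proof (induction s arbitrary: q S t)
  case (Node a ss)
  from gbs_NodeD[OF wf_wfr[OF w1] Node.prems(1)] obtain \<xi>1 where
    x: "(q,a,length ss,\<xi>1) \<in> rules T1" "inst (GE T1 ss) \<xi>1 (to_trm t :: (_,unit) trm)" by blast
  have rk: "ranked (inp T2) t" using gbs_ranked[OF w1 Node.prems(1)] io by simp
  from DA[OF wf_wfr[OF w2] x(2) Node.prems(2,3) rk] obtain \<zeta> where
    z: "bs (dom_aut T2) S \<xi>1 (map_trm (\<lambda>x. x) (\<lambda>((q'', p'), i). (p', Var (q'', i))) \<zeta>)"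
       "inst (EA (GE T1 ss) T2) \<zeta> (to_trm t :: (_,unit) trm)" by blast
  have r: "((q,S),a,length ss,\<zeta>) \<in> rules (T1hat T1 T2)"
    using x(1) Node.prems(2) z(1) by (auto simp: H_rules translates_bs)
  have "inst (GI (T1hat T1 T2) ss) \<zeta> (to_trm t :: (_,unit) trm)"
  proof (rule inst_mono_g[OF z(2)], intro allI impI)
    fix v t' assume v: "v \<in> set2_trm \<zeta>" "EA (GE T1 ss) T2 v (to_trm t' :: (_,unit) trm)"
    obtain q'' S'' i where vv: "v = ((q'',S''),i)" by (metis prod.exhaust)
    have g: "1 \<le> i" "i \<le> length ss" "gbs T1 q'' (ss!(i-1)) t'" "S'' \<subseteq> states T2" "S'' \<subseteq> DD T2 t'"
      using v vv unfolding EA_def GE_def by (auto dest: to_trm_inj)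
    have "ss!(i-1) \<in> set ss" using g by auto
    from Node.IH[OF this g(3,4,5)] g
    show "GI (T1hat T1 T2) ss v (to_trm t')" using vv by (auto simp: GI_def)
  qed
  from gbs_NodeI[OF r this] show ?case .
qed


definition LL :: "('q1, 'f, 'g) tdtt \<Rightarrow> ('q2, 'g, 'h) tdtt \<Rightarrow> 'f tree \<Rightarrow> ('q1 \<times> 'q2 set) set" where
  "LL T1 T2 u = {h \<in> states (T1hat T1 T2). \<exists>t. gbs (T1hat T1 T2) h u t}"

fun lab :: "('f tree \<Rightarrow> 'l) \<Rightarrow> 'f tree \<Rightarrow> ('f \<times> 'l list) tree" where
  "lab L (Node a ss) = Node (a, map L ss) (map (lab L) ss)"

lemma M_rule: "((q,S),a,k,\<zeta>) \<in> rules (T1hat T1 T2) \<Longrightarrow> q2 \<in> S \<Longrightarrow> q2 \<in> states T2 \<Longrightarrow> translates T2 q2 \<zeta> \<gamma> \<Longrightarrow>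
  (\<forall>(x,i)\<in>set2_trm \<gamma>. is_Mstate x) \<Longrightarrow> length ls = k \<Longrightarrow>
  (\<forall>i<k. ls!i \<in> Pow (states (T1hat T1 T2)) \<and> vars_at \<zeta> (Suc i) \<subseteq> ls!i) \<Longrightarrow>
  (((q,S),q2),(a,ls),k,\<gamma>) \<in> rules (la_trans (constr_M T1 T2))"
  unfolding constr_M_def Let_def
  apply (simp add: is_Mstate_def)
  apply (rule conjI)
   apply (simp add: product_def)
   apply blast
  by blast

lemma M_states: "((q1, S), q2) \<in> states (la_trans (constr_M T1 T2)) \<Longrightarrow> q2 \<in> S"
  unfolding constr_M_def Let_def by (simp add: is_Mstate_def)

lemma M_la: "la_aut (constr_M T1 T2) = dom_aut (T1hat T1 T2)"
  unfolding constr_M_def Let_def by simp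


lemma Main:
  assumes w1: "wf_tdtt T1" and w2: "wf_tdtt T2" and io: "inp T2 = outp T1"
  shows "gbs T1 q s t \<Longrightarrow> S \<subseteq> states T2 \<Longrightarrow> S \<subseteq> DD T2 t \<Longrightarrow> q2 \<in> S \<Longrightarrow> gbs T2 q2 t r \<Longrightarrow>
    gbs (la_trans (constr_M T1 T2)) ((q,S),q2) (lab (LL T1 T2) s) r"
proof (induction s arbitrary: q S q2 t r)
  case (Node a ss)
  from gbs_NodeD[OF wf_wfr[OF w1] Node.prems(1)] obtain \<xi>1 where
    x: "(q,a,length ss,\<xi>1) \<in> rules T1" "inst (GE T1 ss) \<xi>1 (to_trm t :: (_,unit) trm)" by blast
  have rk: "ranked (inp T2) t" using gbs_ranked[OF w1 Node.prems(1)] io by simp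
  from DA[where 'u=unit, OF wf_wfr[OF w2] x(2) Node.prems(2,3) rk] obtain \<zeta> where
    z: "bs (dom_aut T2) S \<xi>1 (map_trm (\<lambda>x. x) (\<lambda>((q'', p'), i). (p', Var (q'', i))) \<zeta>)"
       "inst (EA (GE T1 ss) T2) \<zeta> (to_trm t :: (_,unit) trm)"
       "\<forall>p r. p \<in> S \<longrightarrow> gbs T2 p t r \<longrightarrow> (\<exists>\<gamma>. bs T2 p \<zeta> (map_trm (\<lambda>x. x) (\<lambda>((h, p'), i). (p', Var (h, i))) \<gamma>)
            \<and> inst (EB (GE T1 ss :: _ \<Rightarrow> (_, unit) trm \<Rightarrow> bool) T2) \<gamma> (to_trm r :: (_,unit) trm))"
 by blast
  from z(3) Node.prems(4,5) obtain \<gamma> where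
    g: "bs T2 q2 \<zeta> (map_trm (\<lambda>x. x) (\<lambda>((h, p'), i). (p', Var (h, i))) \<gamma>)"
       "inst (EB (GE T1 ss :: _ \<Rightarrow> (_, unit) trm \<Rightarrow> bool) T2) \<gamma> (to_trm r :: (_,unit) trm)" by blast
  have rH: "((q,S),a,length ss,\<zeta>) \<in> rules (T1hat T1 T2)"
    using x(1) Node.prems(2) z(1) by (auto simp: H_rules translates_bs)
  have tr: "translates T2 q2 \<zeta> \<gamma>" using g(1) by (simp add: translates_bs)
  have Ms: "\<forall>(x,i)\<in>set2_trm \<gamma>. is_Mstate x"
  proof (clarify)
    fix x i assume "(x,i) \<in> set2_trm \<gamma>"
    from inst_ex_var_g[OF g(2) this] obtain t' where "EB (GE T1 ss :: _ \<Rightarrow> (_, unit) trm \<Rightarrow> bool) T2 (x,i) (to_trm t' :: (_,unit) trm)" by blast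
    then show "is_Mstate x" unfolding EB_def is_Mstate_def by (auto split: prod.splits)
  qed
  have LA: "\<forall>i<length ss. LL T1 T2 (ss!i) \<in> Pow (states (T1hat T1 T2)) \<and> vars_at \<zeta> (Suc i) \<subseteq> LL T1 T2 (ss!i)"
  proof (intro allI impI conjI)
    fix i assume i: "i < length ss"
    show "LL T1 T2 (ss!i) \<in> Pow (states (T1hat T1 T2))" unfolding LL_def by blast
    show "vars_at \<zeta> (Suc i) \<subseteq> LL T1 T2 (ss!i)"
    proof
      fix h assume "h \<in> vars_at \<zeta> (Suc i)"
      then have "(h, Suc i) \<in> set2_trm \<zeta>" unfolding vars_at_def by blast
      from inst_ex_var_g[OF z(2) this] obtain t' where
        e: "EA (GE T1 ss) T2 (h, Suc i) (to_trm t' :: (_,unit) trm)" by blast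
      obtain q'' S'' where hh: "h = (q'', S'')" by (cases h)
      have g: "gbs T1 q'' (ss!i) t'" "S'' \<subseteq> states T2" "S'' \<subseteq> DD T2 t'" "q'' \<in> states T1"
        using e hh unfolding EA_def GE_def by (auto dest: to_trm_inj)
      from H_complete[OF w1 w2 io g(1-3)] g(2,4) show "h \<in> LL T1 T2 (ss!i)"
        using hh unfolding LL_def by auto
    qed
  qed
  have rM: "(((q,S),q2),(a, map (LL T1 T2) ss), length (map (lab (LL T1 T2)) ss), \<gamma>) \<in> rules (la_trans (constr_M T1 T2))"
    using M_rule[OF rH Node.prems(4) _ tr Ms, of "map (LL T1 T2) ss"] Node.prems(2,4) LA by auto
  have "inst (GI (la_trans (constr_M T1 T2)) (map (lab (LL T1 T2)) ss)) \<gamma> (to_trm r :: (_,unit) trm)"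
  proof (rule inst_mono_g[OF g(2)], intro allI impI)
    fix v r' assume v: "v \<in> set2_trm \<gamma>" "EB (GE T1 ss :: _ \<Rightarrow> (_, unit) trm \<Rightarrow> bool) T2 v (to_trm r' :: (_,unit) trm)"
    obtain q'' S'' p' i where vv: "v = (((q'',S''),p'),i)" by (metis prod.exhaust)
    from v vv obtain t' where e: "1 \<le> i" "i \<le> length ss" "gbs T1 q'' (ss!(i-1)) t'" "S'' \<subseteq> states T2"
      "S'' \<subseteq> DD T2 t'" "p' \<in> S''" "gbs T2 p' t' r'"
      unfolding EB_def EA_def GE_def by (auto dest: to_trm_inj)
    have "ss!(i-1) \<in> set ss" using e by auto
    from Node.IH[OF this e(3,4,5,6,7)] e
    show "GI (la_trans (constr_M T1 T2)) (map (lab (LL T1 T2)) ss) v (to_trm r')"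
      using vv by (auto simp: GI_def)
  qed
  from gbs_NodeI[OF rM this] show ?case by simp
qed

lemma relabel_lab:
  assumes w1: "wf_tdtt T1" and w2: "wf_tdtt T2"
  shows "ranked (inp T1) s \<Longrightarrow> relabel (dom_aut (T1hat T1 T2)) s (lab (LL T1 T2) s)"
proof (induction s)
  case (Node a ss)
  have "\<forall>i<length ss. LL T1 T2 (ss ! i) \<in> states (dom_aut (T1hat T1 T2)) \<and>
      accepts (dom_aut (T1hat T1 T2)) (LL T1 T2 (ss ! i)) (ss ! i)"
  proof (intro allI impI conjI)
    fix i assume i: "i < length ss"
    show "LL T1 T2 (ss ! i) \<in> states (dom_aut (T1hat T1 T2))" unfolding LL_def by auto
    have "gbs (dom_aut (T1hat T1 T2)) (LL T1 T2 (ss ! i)) (ss ! i) (ss ! i)"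
      apply (rule Acc[OF wfr_H[OF w1 w2]])
      using Node.prems i unfolding LL_def DD_def by auto
    then show "accepts (dom_aut (T1hat T1 T2)) (LL T1 T2 (ss ! i)) (ss ! i)"
      unfolding accepts_def produces_gbs .
  qed
  moreover have "list_all2 (relabel (dom_aut (T1hat T1 T2))) ss (map (lab (LL T1 T2)) ss)"
    using Node by (auto simp: list_all2_conv_all_nth)
  ultimately show ?case by (auto intro: relabel.intros)
qed

theorem lemma5:
  fixes T1 :: "('q1, 'f, 'g) tdtt" and T2 :: "('q2, 'g, 'h) tdtt"
    and s :: "'f tree" and t :: "'g tree" and r :: "'h tree"
  assumes "wf_tdtt T1" and "wf_tdtt T2" and "inp T2 = outp T1"
    and "(q1, S) \<in> states (T1hat T1 T2)" and "q2 \<in> states T2"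
    and "((q1, S), q2) \<in> states (la_trans (constr_M T1 T2))"
    and "ranked (inp T1) s"
    and "produces (T1hat T1 T2) (q1, S) s t"
    and "produces T2 q2 t r"
  shows "produces_la (constr_M T1 T2) ((q1, S), q2) s r"
proof -
  have h: "gbs (T1hat T1 T2) (q1, S) s t" using assms(8) by (simp add: produces_gbs)
  from H_sound[OF assms(1,2) h] have a: "gbs T1 q1 s t" "S \<subseteq> DD T2 t" by auto
  have S: "S \<subseteq> states T2" using assms(4) by auto
  have q2: "q2 \<in> S" using M_states[OF assms(6)] .
  have t2: "gbs T2 q2 t r" using assms(9) by (simp add: produces_gbs)
  from Main[OF assms(1,2,3) a(1) S a(2) q2 t2]
  have m: "produces (la_trans (constr_M T1 T2)) ((q1, S), q2) (lab (LL T1 T2) s) r"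
    by (simp add: produces_gbs)
  have "relabel (la_aut (constr_M T1 T2)) s (lab (LL T1 T2) s)"
    unfolding M_la by (rule relabel_lab[OF assms(1,2,7)])
  then show ?thesis unfolding produces_la_def using m by blast
qed

end
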